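(* Under Assumption 1, let $(x^k)_{k\in\mathbb{N}}$ be generated by PPGA. Then: (i) there exists $a>0$ such that $F(x^{k+1})+\frac a2\|x^{k+1}-x^k\|_2^2\le F(x^k)$ for all $k\in\mathbb{N}$; (ii) there exist $b>0$ and $w^{k+1}\in\partial F(x^{k+1})$ such that $\|w^{k+1}\|_2\le b\|x^{k+1}-x^k\|_2$ for all $k\in\mathbb{N}$.
   Context: Let $f:\mathbb{R}^n\to(-\infty,+\infty]$ be proper lsc, $g,h:\mathbb{R}^n\to\mathbb{R}$, $\Omega:=\{x:g(x)\ne0\}$, $F(x):=\frac{f(x)+h(x)}{g(x)}$ on $\Omega\cap\mathrm{dom}(f)$ and $+\infty$ otherwise. Assumption 1: (i) $f$ locally Lipschitz on $\mathrm{dom}(f)\cap\Omega$; (ii) $g$ locally Lipschitz continuously differentiable and positive on $\Omega\cap\mathrm{dom}(f)$; (iii) $\nabla h$ is $L$-Lipschitz, $L>0$; (iv) $f+h\ge0$ on $\mathrm{dom}(f)$, $\Omega\cap\mathrm{dom}(f)\ne\emptyset$; (v) $\mathrm{prox}_{f-\gamma g}(x)\ne\emptyset$ for all $x$, $\gamma\ge0$; (vi) $F$ lsc and level bounded. $\mathrm{prox}_\varphi(x):=\arg\min_u\{\varphi(u)+\frac12\|u-x\|_2^2\}$. Fréchet subdifferential: $\hat\partial\varphi(x):=\{v:\liminf_{z\to x,z\ne x}\frac{\varphi(z)-\varphi(x)-\langle v,z-x\rangle}{\|z-x\|_2}\ge0\}$. Limiting subdifferential: $\partial\varphi(x):=\{v:\exists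 x^k\to x,\ \varphi(x^k)\to\varphi(x),\ v^k\in\hat\partial\varphi(x^k),\ v^k\to v\}$. PPGA: choose $x^0\in\Omega\cap\mathrm{dom}(f)$ and $0<\underline\alpha\le\alpha_k\le\overline\alpha<1/L$; for $k=0,1,\dots$ set $C_k:=F(x^k)$ and pick any $x^{k+1}\in\mathrm{prox}_{\alpha_k(f-C_kg)}(x^k-\alpha_k\nabla h(x^k))$. *)

theory Defs
  imports "HOL-Analysis.Analysis"
begin

definition edom :: "('a \<Rightarrow> ereal) \<Rightarrow> 'a set" where
  "edom \<phi> = {x. \<phi> x < \<infinity>}"

definition proper_fun :: "('a \<Rightarrow> ereal) \<Rightarrow> bool" where
  "proper_fun \<phi> \<longleftrightarrow> (\<forall>x. \<phi> x \<noteq> -\<infinity>) \<and> (\<exists>x. \<phi> x \<noteq> \<infinity>)"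

definition lsc_fun :: "('a::topological_space \<Rightarrow> ereal) \<Rightarrow> bool" where
  "lsc_fun \<phi> \<longleftrightarrow> (\<forall>x. \<phi> x \<le> Liminf (at x) \<phi>)"

definition level_bounded :: "('a::metric_space \<Rightarrow> ereal) \<Rightarrow> bool" where
  "level_bounded \<phi> \<longleftrightarrow> (\<forall>c::real. bounded {x. \<phi> x \<le> ereal c})"

definition loc_lipschitz_on :: "'a::metric_space set \<Rightarrow> ('a \<Rightarrow> 'b::real_normed_vector) \<Rightarrow> bool" where
  "loc_lipschitz_on S \<phi> \<longleftrightarrow>
     (\<forall>x\<in>S. \<exists>\<delta>>0. \<exists>K. \<forall>y\<in>ball x \<delta> \<inter> S. \<forall>z\<in>ball x \<delta> \<inter> S.
        dist (\<phi> y) (\<phi> z) \<le> K * dist y z)"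

definition prox :: "('a::real_normed_vector \<Rightarrow> ereal) \<Rightarrow> 'a \<Rightarrow> 'a set" where
  "prox \<phi> x = {u. \<forall>v. \<phi> u + ereal ((norm (u - x))\<^sup>2 / 2) \<le> \<phi> v + ereal ((norm (v - x))\<^sup>2 / 2)}"

definition frac_obj :: "('a \<Rightarrow> ereal) \<Rightarrow> ('a \<Rightarrow> real) \<Rightarrow> ('a \<Rightarrow> real) \<Rightarrow> 'a \<Rightarrow> ereal" where
  "frac_obj f g h x =
     (if g x \<noteq> 0 \<and> f x < \<infinity> then ereal ((real_of_ereal (f x) + h x) / g x) else \<infinity>)"

definition frechet_subdiff :: "('a::real_inner \<Rightarrow> ereal) \<Rightarrow> 'a \<Rightarrow> 'a set" where
  "frechet_subdiff \<phi> x = {v. \<bar>\<phi> x\<bar> \<noteq> \<infinity> \<and>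
      Liminf (at x) (\<lambda>z. (\<phi> z - \<phi> x - ereal (inner v (z - x))) / ereal (norm (z - x))) \<ge> 0}"

definition limiting_subdiff :: "('a::real_inner \<Rightarrow> ereal) \<Rightarrow> 'a \<Rightarrow> 'a set" where
  "limiting_subdiff \<phi> x = {v. \<exists>xs vs. xs \<longlonglongrightarrow> x \<and> (\<lambda>k. \<phi> (xs k)) \<longlonglongrightarrow> \<phi> x \<and>
      (\<forall>k. vs k \<in> frechet_subdiff \<phi> (xs k)) \<and> vs \<longlonglongrightarrow> v}"

end

theory Submission
  imports Defs
begin



lemma loclip_continuous:
  fixes \<phi> :: "'a::metric_space \<Rightarrow> 'b::real_normed_vector"
  assumes "loc_lipschitz_on S \<phi>"
  shows "continuous_on S \<phi>"
  unfolding continuous_on_iff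
proof (intro ballI allI impI)
  fix x e assume x: "x \<in> S" and e: "(e::real) > 0"
  from assms x obtain \<delta> K where d: "\<delta> > 0" and K: "\<forall>y\<in>ball x \<delta> \<inter> S. \<forall>z\<in>ball x \<delta> \<inter> S.
        dist (\<phi> y) (\<phi> z) \<le> K * dist y z"
    unfolding loc_lipschitz_on_def by blast
  define d' where "d' = min \<delta> (e / (max K 0 + 1))"
  have "d' > 0" using d e by (simp add: d'_def)
  moreover have "dist (\<phi> x') (\<phi> x) < e" if "x' \<in> S" "dist x' x < d'" for x'
  proof -
    have "x' \<in> ball x \<delta> \<inter> S" "x \<in> ball x \<delta> \<inter> S" using that d x by (auto simp: d'_def dist_commute)
    then have "dist (\<phi> x') (\<phi> x) \<le> K * dist x' x" using K by blast
    also have "\<dots> \<le> max K 0 * dist x' x" by (simp add: mult_right_mono)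
    also have "\<dots> \<le> max K 0 * d'" using that by (intro mult_left_mono) auto
    also have "\<dots> < (max K 0 + 1) * d'" using \<open>d' > 0\<close> by (simp add: distrib_right)
    also have "\<dots> \<le> (max K 0 + 1) * (e / (max K 0 + 1))" by (intro mult_left_mono) (auto simp: d'_def)
    also have "\<dots> = e" by simp
    finally show ?thesis .
  qed
  ultimately show "\<exists>d>0. \<forall>x'\<in>S. dist x' x < d \<longrightarrow> dist (\<phi> x') (\<phi> x) < e" by blast
qed

lemma loclip_compact:
  fixes \<phi> :: "'a::metric_space \<Rightarrow> real"
  assumes L: "loc_lipschitz_on S \<phi>" and K: "compact K" and KS: "K \<subseteq> S"
  shows "\<exists>M\<ge>0. \<forall>y\<in>K. \<forall>z\<in>K. \<bar>\<phi> y - \<phi> z\<bar> \<le> M * dist y z"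
proof -
  have "continuous_on K \<phi>" using loclip_continuous[OF L] KS continuous_on_subset by blast
  then have "compact (\<phi> ` K)" using K compact_continuous_image by blast
  then obtain B where B: "\<forall>y\<in>K. \<bar>\<phi> y\<bar> \<le> B" and B0: "B > 0"
    using compact_imp_bounded bounded_pos by (metis image_eqI real_norm_def)
  have "\<forall>x\<in>S. \<exists>\<delta>K. fst \<delta>K > 0 \<and> (\<forall>y\<in>ball x (fst \<delta>K) \<inter> S. \<forall>z\<in>ball x (fst \<delta>K) \<inter> S.
        dist (\<phi> y) (\<phi> z) \<le> snd \<delta>K * dist y z)"
    using L unfolding loc_lipschitz_on_def by force
  then obtain dk where dk: "\<And>x. x \<in> S \<Longrightarrow> fst (dk x) > 0 \<and> (\<forall>y\<in>ball x (fst (dk x)) \<inter> S. \<forall>z\<in>ball x (fst (dk x)) \<inter> S.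
        dist (\<phi> y) (\<phi> z) \<le> snd (dk x) * dist y z)"
    by metis
  have "K \<subseteq> (\<Union>c\<in>K. ball c (fst (dk c)))" using dk KS by force
  then obtain C where C: "C \<subseteq> K" "finite C" "K \<subseteq> (\<Union>c\<in>C. ball c (fst (dk c)))"
    using compactE_image[OF K, of K "\<lambda>c. ball c (fst (dk c))"] by blast
  then have "K \<subseteq> \<Union>((\<lambda>c. ball c (fst (dk c))) ` C)" by blast
  then obtain e where e: "e > 0" "\<And>x. x \<in> K \<Longrightarrow> \<exists>G \<in> (\<lambda>c. ball c (fst (dk c))) ` C. ball x e \<subseteq> G"
    using Heine_Borel_lemma[OF K] by (metis (no_types, lifting) imageE open_ball)
  define MK where "MK = (\<Sum>c\<in>C. \<bar>snd (dk c)\<bar>)"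
  have MK0: "MK \<ge> 0" by (simp add: MK_def sum_nonneg)
  define M where "M = MK + 2 * B / e"
  have M0: "M \<ge> 0" using MK0 B0 e by (simp add: M_def)
  have "\<bar>\<phi> y - \<phi> z\<bar> \<le> M * dist y z" if y: "y \<in> K" and z: "z \<in> K" for y z
  proof (cases "dist y z < e")
    case True
    obtain c where c: "c \<in> C" "ball y e \<subseteq> ball c (fst (dk c))" using e(2)[OF y] by blast
    have cS: "c \<in> S" using c C KS by blast
    have "y \<in> ball y e" "z \<in> ball y e" using True e by auto
    then have "y \<in> ball c (fst (dk c)) \<inter> S" "z \<in> ball c (fst (dk c)) \<inter> S"
      using c(2) y z KS by blast+
    then have "dist (\<phi> y) (\<phi> z) \<le> snd (dk c) * dist y z" using dk[OF cS] by blast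
    also have "\<dots> \<le> MK * dist y z"
    proof (rule mult_right_mono)
      have "snd (dk c) \<le> \<bar>snd (dk c)\<bar>" by simp
      also have "\<dots> \<le> MK" unfolding MK_def using c C(2)
        by (intro member_le_sum) auto
      finally show "snd (dk c) \<le> MK" .
    qed simp
    also have "\<dots> \<le> M * dist y z" using B0 e by (intro mult_right_mono) (auto simp: M_def)
    finally show ?thesis by (simp add: dist_real_def)
  next
    case False
    have "\<bar>\<phi> y - \<phi> z\<bar> \<le> 2 * B" proof -
      have "\<bar>\<phi> y\<bar> \<le> B" "\<bar>\<phi> z\<bar> \<le> B" using B y z by auto
      then show ?thesis by linarith
    qed
    also have "\<dots> = (2 * B / e) * e" using e by simp
    also have "\<dots> \<le> (2 * B / e) * dist y z" using False B0 e by (intro mult_left_mono) auto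
    also have "\<dots> \<le> M * dist y z" using MK0 by (intro mult_right_mono) (auto simp: M_def)
    finally show ?thesis .
  qed
  then show ?thesis using M0 by blast
qed



lemma C1_lip_cball:
  fixes \<phi> :: "'a::euclidean_space \<Rightarrow> real"
  assumes D: "\<And>y. (\<phi> has_derivative (\<lambda>v. inner (G y) v)) (at y)" and C: "continuous_on UNIV G"
  shows "\<exists>B\<ge>0. (\<forall>y\<in>cball 0 R. norm (G y) \<le> B) \<and>
      (\<forall>y\<in>cball 0 R. \<forall>z\<in>cball 0 R. \<bar>\<phi> y - \<phi> z\<bar> \<le> B * norm (y - z))"
proof -
  have "compact (G ` cball 0 R)"
    using compact_continuous_image[OF continuous_on_subset[OF C] compact_cball] by blast
  then obtain B where B: "B > 0" "\<forall>y\<in>cball 0 R. norm (G y) \<le> B"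
    using compact_imp_bounded bounded_pos by (metis image_eqI)
  have "\<bar>\<phi> y - \<phi> z\<bar> \<le> B * norm (y - z)" if "y \<in> cball 0 R" "z \<in> cball 0 R" for y z
  proof -
    have "norm (\<phi> y - \<phi> z) \<le> B * norm (y - z)"
    proof (rule differentiable_bound[where S="cball 0 R" and f'="\<lambda>x v. inner (G x) v"])
      show "convex (cball (0::'a) R)" by simp
      show "(\<phi> has_derivative (\<lambda>v. inner (G x) v)) (at x within cball 0 R)" for x
        by (rule has_derivative_subset[OF D]) simp
      show "onorm (\<lambda>v. inner (G x) v) \<le> B" if "x \<in> cball 0 R" for x
      proof (rule onorm_le)
        fix v
        have "norm (inner (G x) v) \<le> norm (G x) * norm v" by (simp add: Cauchy_Schwarz_ineq2)
        also have "\<dots> \<le> B * norm v" using B that by (intro mult_right_mono) auto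
        finally show "norm (inner (G x) v) \<le> B * norm v" .
      qed
    qed (use that in auto)
    then show ?thesis by simp
  qed
  then show ?thesis using B by (intro exI[of _ B]) auto
qed

lemma descent:
  fixes h :: "'a::euclidean_space \<Rightarrow> real"
  assumes D: "\<And>y. (h has_derivative (\<lambda>v. inner (G y) v)) (at y)"
    and Lip: "\<And>y z. norm (G y - G z) \<le> L * norm (y - z)" 
  shows "h b \<le> h a + inner (G a) (b - a) + L / 2 * (norm (b - a))\<^sup>2"
proof -
  define e where "e = b - a"
  define \<rho> where "\<rho> t = h (a + t *\<^sub>R e) - t * inner (G a) e - L * t\<^sup>2 / 2 * (norm e)\<^sup>2" for t
  have "\<rho> 0 \<ge> \<rho> 1"
  proof (rule DERIV_nonpos_imp_nonincreasing[of 0 1 \<rho>])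
    fix t :: real assume t: "0 \<le> t" "t \<le> 1"
    have d1: "((\<lambda>t. h (a + t *\<^sub>R e)) has_derivative (\<lambda>s. inner (G (a + t *\<^sub>R e)) (s *\<^sub>R e))) (at t)"
      by (rule has_derivative_compose[OF _ D, where f="\<lambda>t. a + t *\<^sub>R e", simplified])
         (auto intro!: derivative_eq_intros)
    have "(\<rho> has_real_derivative (inner (G (a + t *\<^sub>R e)) e - inner (G a) e - L * t * (norm e)\<^sup>2)) (at t)"
      unfolding \<rho>_def has_field_derivative_def
      by (rule derivative_eq_intros d1 | simp)+ (auto simp: algebra_simps fun_eq_iff)
    moreover have "inner (G (a + t *\<^sub>R e)) e - inner (G a) e - L * t * (norm e)\<^sup>2 \<le> 0"
    proof -
      have "inner (G (a + t *\<^sub>R e)) e - inner (G a) e = inner (G (a + t *\<^sub>R e) - G a) e"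
        by (simp add: inner_diff_left)
      also have "\<dots> \<le> norm (G (a + t *\<^sub>R e) - G a) * norm e" by (rule norm_cauchy_schwarz)
      also have "\<dots> \<le> (L * norm (t *\<^sub>R e)) * norm e" using Lip[of "a + t *\<^sub>R e" a]
        by (intro mult_right_mono) auto
      also have "\<dots> = L * t * (norm e)\<^sup>2" using t by (simp add: power2_eq_square)
      finally show ?thesis by simp
    qed
    ultimately show "\<exists>y. (\<rho> has_real_derivative y) (at t) \<and> y \<le> 0" by blast
  qed simp
  then show ?thesis by (simp add: \<rho>_def e_def)
qed

lemma lsc_closed:
  fixes F :: "'a::topological_space \<Rightarrow> ereal"
  assumes "lsc_fun F"
  shows "closed {x. F x \<le> c}"
  unfolding closed_def open_subopen[of "- {x. F x \<le> c}"]
proof (intro ballI)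
  fix x assume "x \<in> - {x. F x \<le> c}"
  then have "c < F x" by auto
  also have "F x \<le> Liminf (at x) F" using assms by (simp add: lsc_fun_def)
  finally have "eventually (\<lambda>y. c < F y) (at x)" using le_Liminf_iff by blast
  then obtain T where T: "open T" "x \<in> T" "\<forall>y\<in>T. y \<noteq> x \<longrightarrow> c < F y"
    by (auto simp: eventually_at_topological)
  then have "T \<subseteq> - {x. F x \<le> c}" using \<open>c < F x\<close> by (auto simp: not_le)
  then show "\<exists>T. open T \<and> x \<in> T \<and> T \<subseteq> - {x. F x \<le> c}" using T by blast
qed



lemma core_real:
  fixes n g1 gz \<eta> \<eta>2 \<epsilon> N ip X A :: real
  assumes n: "n > 0" and g1: "g1 > 0" and gz: "gz \<ge> g1 / 2" and gd: "\<bar>gz - g1\<bar> \<le> \<eta>2"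
    and e2: "\<eta>2 \<le> \<epsilon> * g1\<^sup>2 / (4 * (N + 1))" and N: "N \<ge> 0" and ip: "\<bar>ip\<bar> \<le> N * n"
    and X: "X \<ge> - (A * \<eta> * n)" and A: "A > 0" and eta: "\<eta> = \<epsilon> * g1 / (4 * A)" and e: "\<epsilon> > 0"
  shows "- (\<epsilon> * n) \<le> X / gz + ip * (1 / gz - 1 / g1)"
proof -
  have gzp: "gz > 0" using gz g1 by linarith
  have Aeta: "A * \<eta> = \<epsilon> * g1 / 4" using A by (simp add: eta)
  have "X / gz \<ge> - (A * \<eta> * n) / gz" using divide_right_mono[OF X, of gz] gzp by simp
  moreover have "- (A * \<eta> * n) / gz \<ge> - (\<epsilon> * n / 2)"
  proof -
    have "\<epsilon> * g1 / 4 \<ge> 0" using e g1 by simp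
    then have "A * \<eta> \<ge> 0" using Aeta by linarith
    then have "A * \<eta> * n \<ge> 0" using n by simp
    then have "A * \<eta> * n / gz \<le> A * \<eta> * n / (g1 / 2)"
      using gz g1 by (intro divide_left_mono) (auto intro!: mult_pos_pos)
    also have "\<dots> = \<epsilon> * n / 2" using g1 by (simp add: Aeta field_simps)
    finally show ?thesis by simp
  qed
  moreover have "ip * (1 / gz - 1 / g1) \<ge> - (\<epsilon> * n / 2)"
  proof -
    have "ip * (1 / gz - 1 / g1) = ip * ((g1 - gz) / (gz * g1))"
      using gzp g1 by (simp add: field_simps)
    then have "\<bar>ip * (1 / gz - 1 / g1)\<bar> = \<bar>ip\<bar> * (\<bar>gz - g1\<bar> / (gz * g1))"
      using gzp g1 by (simp add: abs_mult abs_minus_commute)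
    also have "\<dots> \<le> (N * n) * (\<eta>2 / ((g1 / 2) * g1))"
      using gzp g1 gz gd ip n N
      by (intro mult_mono frac_le mult_right_mono) auto
    also have "\<dots> \<le> (N * n) * ((\<epsilon> * g1\<^sup>2 / (4 * (N + 1))) / ((g1 / 2) * g1))"
      using e2 g1 N n by (intro mult_left_mono divide_right_mono) auto
    also have "\<dots> = (\<epsilon> * n / 2) * (N / (N + 1))"
    proof -
      have a: "(\<epsilon> * g1\<^sup>2 / (4 * (N + 1))) / ((g1 / 2) * g1) = \<epsilon> / (2 * (N + 1))"
        using g1 N by (simp add: power2_eq_square divide_simps)
      show ?thesis unfolding a by (simp add: field_simps)
    qed
    also have "\<dots> \<le> (\<epsilon> * n / 2) * 1"
      using e n N by (intro mult_left_mono) auto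
    finally show ?thesis by linarith
  qed
  ultimately show ?thesis by linarith
qed

lemma frechet_quot:
  fixes f :: "'a::euclidean_space \<Rightarrow> ereal" and g h :: "'a \<Rightarrow> real" and v Gh Gg :: 'a
  assumes fx1: "f xa = ereal fa" and g1: "g xa > 0" and nm: "\<And>u. f u \<noteq> -\<infinity>"
    and Dh: "(h has_derivative (\<lambda>v. inner Gh v)) (at xa)"
    and Dg: "(g has_derivative (\<lambda>v. inner Gg v)) (at xa)"
    and al: "\<alpha> > 0"
    and glob: "\<And>u r. f u = ereal r \<Longrightarrow>
       fa - C * g xa + inner v (u - xa) - (norm (u - xa))\<^sup>2 / (2*\<alpha>) \<le> r - C * g u"
  shows "(1 / g xa) *\<^sub>R (v + Gh + (C - (fa + h xa) / g xa) *\<^sub>R Gg) \<in> frechet_subdiff (frac_obj f g h) xa"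
proof -
  define G1 where "G1 = g xa"
  define Fr1 where "Fr1 = (fa + h xa) / G1"
  define D where "D = C - Fr1"
  define zv where "zv = v + Gh + D *\<^sub>R Gg"
  define w where "w = (1 / G1) *\<^sub>R zv"
  have G1: "G1 > 0" using g1 by (simp add: G1_def)
  have Fx1: "frac_obj f g h xa = ereal Fr1" using fx1 g1 by (simp add: frac_obj_def Fr1_def G1_def)
  have FrG: "Fr1 * G1 = fa + h xa" using G1 by (simp add: Fr1_def)
  have "0 \<le> Liminf (at xa) (\<lambda>z. (frac_obj f g h z - frac_obj f g h xa - ereal (inner w (z - xa))) / ereal (norm (z - xa)))"
  proof (subst le_Liminf_iff, intro allI impI)
    fix y :: ereal assume "y < 0"
    then obtain r where r: "y < ereal r" "ereal r < 0" using ereal_dense2 by blast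
    define \<epsilon> where "\<epsilon> = - r"
    have e: "\<epsilon> > 0" using r by (simp add: \<epsilon>_def)
    define A where "A = 1 / (2 * \<alpha>) + 1 + \<bar>D\<bar>"
    have A: "A > 0" using al unfolding A_def
      by (metis abs_ge_zero add_pos_nonneg divide_pos_pos zero_less_mult_iff zero_less_numeral zero_less_one add_pos_pos)
    define \<eta> where "\<eta> = \<epsilon> * G1 / (4 * A)"
    have eta: "\<eta> > 0" using e G1 A by (simp add: \<eta>_def)
    define N where "N = norm zv"
    have N: "N \<ge> 0" by (simp add: N_def)
    define \<eta>2 where "\<eta>2 = min (G1 / 2) (\<epsilon> * G1\<^sup>2 / (4 * (N + 1)))"
    have eta2: "\<eta>2 > 0" using e G1 N by (simp add: \<eta>2_def add_nonneg_pos)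
    obtain d1 where d1: "d1 > 0" "\<forall>y. norm (y - xa) < d1 \<longrightarrow> norm (h y - h xa - inner Gh (y - xa)) \<le> \<eta> * norm (y - xa)"
      using Dh[unfolded has_derivative_at_alt] eta by blast
    obtain d2 where d2: "d2 > 0" "\<forall>y. norm (y - xa) < d2 \<longrightarrow> norm (g y - g xa - inner Gg (y - xa)) \<le> \<eta> * norm (y - xa)"
      using Dg[unfolded has_derivative_at_alt] eta by blast
    have "continuous (at xa) g" using has_derivative_continuous[OF Dg] .
    then obtain d3 where d3: "d3 > 0" "\<forall>x'. dist x' xa < d3 \<longrightarrow> dist (g x') (g xa) < \<eta>2"
      using continuous_at_eps_delta eta2 by blast
    define \<delta> where "\<delta> = min (min d1 d2) (min d3 \<eta>)"
    have "eventually (\<lambda>z. ereal (- \<epsilon>) \<le> (frac_obj f g h z - frac_obj f g h xa - ereal (inner w (z - xa))) / ereal (norm (z - xa))) (at xa)"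
      unfolding eventually_at
    proof (intro exI[of _ \<delta>] conjI ballI impI)
      show "\<delta> > 0" using d1 d2 d3 eta by (simp add: \<delta>_def)
      fix z assume z: "z \<in> UNIV" "z \<noteq> xa \<and> dist z xa < \<delta>"
      define n where "n = norm (z - xa)"
      have n: "n > 0" "n < d1" "n < d2" "n < \<eta>" "n < d3" using z by (auto simp: n_def \<delta>_def dist_norm)
      have gd: "\<bar>g z - G1\<bar> \<le> \<eta>2" using d3 n by (auto simp: dist_real_def dist_norm n_def G1_def)
      have "\<eta>2 \<le> G1 / 2" unfolding \<eta>2_def by (rule min.cobounded1)
      then have gz: "g z \<ge> G1 / 2" using gd by (auto simp: abs_le_iff)
      have gzp: "g z > 0" using gz G1 by linarith
      show "ereal (- \<epsilon>) \<le> (frac_obj f g h z - frac_obj f g h xa - ereal (inner w (z - xa))) / ereal (norm (z - xa))"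
      proof (cases "f z < \<infinity>")
        case False
        then have "frac_obj f g h z = \<infinity>" by (simp add: frac_obj_def)
        then show ?thesis using n Fx1 by (simp add: n_def)
      next
        case True
        then obtain rz where rz: "f z = ereal rz" using nm[of z] by (cases "f z") auto
        have Fz: "frac_obj f g h z = ereal ((rz + h z) / g z)" using rz gzp by (simp add: frac_obj_def)
        define ip where "ip = inner zv (z - xa)"
        define X where "X = (rz + h z - Fr1 * g z) - ip"
        have ip_eq: "ip = inner v (z - xa) + inner Gh (z - xa) + D * inner Gg (z - xa)"
          by (simp add: ip_def zv_def inner_add_left)
        have t1: "rz - C * g z - (fa - C * G1) - inner v (z - xa) \<ge> - (\<eta> * n / (2 * \<alpha>))"
        proof -
          have "n\<^sup>2 \<le> \<eta> * n" using n by (simp add: power2_eq_square mult_right_mono)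
          then have "n\<^sup>2 / (2 * \<alpha>) \<le> \<eta> * n / (2 * \<alpha>)" using al by (simp add: divide_right_mono)
          moreover have "fa - C * G1 + inner v (z - xa) - n\<^sup>2 / (2*\<alpha>) \<le> rz - C * g z"
            using glob[OF rz] by (simp add: n_def G1_def)
          ultimately show ?thesis by linarith
        qed
        have t2: "h z - h xa - inner Gh (z - xa) \<ge> - (\<eta> * n)"
          using d1(2) n by (auto simp: n_def)
        have q: "\<bar>g z - G1 - inner Gg (z - xa)\<bar> \<le> \<eta> * n"
          using d2(2) n by (auto simp: n_def G1_def)
        have t3: "D * (g z - G1 - inner Gg (z - xa)) \<ge> - (\<bar>D\<bar> * \<eta> * n)"
        proof -
          have "\<bar>D * (g z - G1 - inner Gg (z - xa))\<bar> \<le> \<bar>D\<bar> * (\<eta> * n)"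
            unfolding abs_mult by (rule mult_left_mono[OF q]) simp
          then show ?thesis by (simp add: abs_le_iff mult.assoc)
        qed
        have Xeq: "X = (rz - C * g z - (fa - C * G1) - inner v (z - xa)) + (h z - h xa - inner Gh (z - xa))
              + D * (g z - G1 - inner Gg (z - xa))"
          unfolding X_def ip_eq D_def using FrG by (simp add: algebra_simps)
        have Aeq: "A * \<eta> * n = \<eta> * n / (2 * \<alpha>) + \<eta> * n + \<bar>D\<bar> * \<eta> * n"
          by (simp add: A_def algebra_simps)
        have X: "X \<ge> - (A * \<eta> * n)" using t1 t2 t3 Xeq Aeq by linarith
        have ipb: "\<bar>ip\<bar> \<le> N * n" unfolding ip_def N_def n_def by (rule Cauchy_Schwarz_ineq2)
        have core: "- (\<epsilon> * n) \<le> X / g z + ip * (1 / g z - 1 / G1)"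
          by (rule core_real[OF n(1) G1 gz gd _ N ipb X A \<eta>_def e]) (simp add: \<eta>2_def)
        have iw: "inner w (z - xa) = ip / G1" by (simp add: w_def ip_def)
        have eq: "X / g z + ip * (1 / g z - 1 / G1) = (rz + h z) / g z - Fr1 - inner w (z - xa)"
          unfolding iw X_def using gzp G1 by (simp add: field_simps)
        have "- \<epsilon> \<le> ((rz + h z) / g z - Fr1 - inner w (z - xa)) / n"
          using core eq n(1) by (simp add: pos_le_divide_eq)
        then show ?thesis using Fz Fx1 n(1) by (simp add: n_def)
      qed
    qed
    then show "eventually (\<lambda>z. y < (frac_obj f g h z - frac_obj f g h xa - ereal (inner w (z - xa))) / ereal (norm (z - xa))) (at xa)"
      by (rule eventually_mono) (use r in \<open>auto simp: \<epsilon>_def\<close>)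
  qed
  then show ?thesis using Fx1
    unfolding frechet_subdiff_def w_def zv_def D_def Fr1_def G1_def by simp
qed



lemma prox_ineq:
  fixes f :: "'a::real_normed_vector \<Rightarrow> ereal"
  assumes P: "x1 \<in> prox (\<lambda>u. ereal \<alpha> * (f u - ereal (C * g u))) y" and al: "\<alpha> > 0"
    and nm: "\<And>u. f u \<noteq> -\<infinity>" and fu: "f u = ereal r"
  shows "\<exists>r1. f x1 = ereal r1 \<and> \<alpha> * (r1 - C * g x1) + (norm (x1 - y))\<^sup>2 / 2 \<le> \<alpha> * (r - C * g u) + (norm (u - y))\<^sup>2 / 2"
proof -
  have H: "ereal \<alpha> * (f x1 - ereal (C * g x1)) + ereal ((norm (x1 - y))\<^sup>2 / 2)
      \<le> ereal \<alpha> * (f u - ereal (C * g u)) + ereal ((norm (u - y))\<^sup>2 / 2)"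
    using P unfolding prox_def by blast
  show ?thesis
  proof (cases "f x1")
    case (real r1)
    then show ?thesis using H fu by (intro exI[of _ r1]) (simp add: divide_simps)
  next
    case PInf
    then show ?thesis using H fu al by simp
  next
    case MInf
    then show ?thesis using nm by blast
  qed
qed

lemma ppga_step:
  fixes f :: "'a::euclidean_space \<Rightarrow> ereal" and g h :: "'a \<Rightarrow> real" and Gh :: "'a \<Rightarrow> 'a"
  assumes nm: "\<And>u. f u \<noteq> -\<infinity>"
    and h_deriv: "\<And>y. (h has_derivative (\<lambda>v. inner (Gh y) v)) (at y)"
    and h_lip: "\<And>y z. norm (Gh y - Gh z) \<le> L * norm (y - z)"
    and fh: "\<And>y. f y < \<infinity> \<Longrightarrow> f y + ereal (h y) \<ge> 0"
    and gp: "\<And>y. g y \<noteq> 0 \<Longrightarrow> f y < \<infinity> \<Longrightarrow> g y > 0"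
    and fk: "f xk = ereal fk" and gk: "g xk > 0"
    and al: "0 < \<alpha>" "\<alpha> \<le> \<alpha>u" "\<alpha>u < 1 / L" and L: "L > 0"
    and it: "x1 \<in> prox (\<lambda>u. ereal \<alpha> * (f u - ereal (((fk + h xk) / g xk) * g u))) (xk - \<alpha> *\<^sub>R Gh xk)"
  shows "\<exists>f1. f x1 = ereal f1 \<and> g x1 > 0 \<and>
           f1 + h x1 - ((fk + h xk) / g xk) * g x1 \<le> - ((1 / \<alpha>u - L) / 2) * (norm (x1 - xk))\<^sup>2"
proof -
  define C where "C = (fk + h xk) / g xk"
  define e where "e = x1 - xk"
  define E where "E = (norm e)\<^sup>2"
  define c where "c = (1 / \<alpha>u - L) / 2"
  obtain f1 where f1: "f x1 = ereal f1" and
    I: "\<alpha> * (f1 - C * g x1) + (norm (x1 - (xk - \<alpha> *\<^sub>R Gh xk)))\<^sup>2 / 2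
        \<le> \<alpha> * (fk - C * g xk) + (norm (xk - (xk - \<alpha> *\<^sub>R Gh xk)))\<^sup>2 / 2"
    using prox_ineq[OF it[folded C_def] al(1) nm fk] by blast
  have Ck: "fk - C * g xk = - h xk" using gk by (simp add: C_def)
  have n1: "(norm (x1 - (xk - \<alpha> *\<^sub>R Gh xk)))\<^sup>2 = E + 2 * \<alpha> * inner e (Gh xk) + \<alpha>\<^sup>2 * (norm (Gh xk))\<^sup>2"
  proof -
    have q1: "x1 - (xk - \<alpha> *\<^sub>R Gh xk) = e + \<alpha> *\<^sub>R Gh xk" by (simp add: e_def)
    have q2: "(norm (e + \<alpha> *\<^sub>R Gh xk))\<^sup>2 = (norm e)\<^sup>2 + 2 * inner e (\<alpha> *\<^sub>R Gh xk) + (norm (\<alpha> *\<^sub>R Gh xk))\<^sup>2"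
      using dot_norm[of e "\<alpha> *\<^sub>R Gh xk"] by simp
    show ?thesis unfolding E_def q1 q2 by (simp add: power_mult_distrib)
  qed
  have n2: "(norm (xk - (xk - \<alpha> *\<^sub>R Gh xk)))\<^sup>2 = \<alpha>\<^sup>2 * (norm (Gh xk))\<^sup>2"
    by (simp add: power_mult_distrib)
  have I2: "\<alpha> * (f1 - C * g x1 + h xk + inner e (Gh xk)) \<le> - (E / 2)"
    using I unfolding n1 n2 Ck by (simp add: field_simps)
  have desc: "h x1 \<le> h xk + inner (Gh xk) e + L / 2 * E"
    using descent[OF h_deriv h_lip, of x1 xk] by (simp add: e_def E_def)
  have "f1 - C * g x1 + h xk + inner e (Gh xk) \<le> (- (E / 2)) / \<alpha>"
    using I2 al(1) by (simp only: pos_le_divide_eq mult.commute)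
  then have "f1 - C * g x1 + h xk + inner e (Gh xk) \<le> - (E / 2 / \<alpha>)" by simp
  moreover have "E / 2 / \<alpha> \<ge> E / 2 / \<alpha>u"
    using al E_def by (intro divide_left_mono) auto
  ultimately have "f1 + h x1 - C * g x1 \<le> L / 2 * E - E / 2 / \<alpha>u"
    using desc by (simp add: inner_commute)
  also have "\<dots> = - c * E" by (simp add: c_def field_simps)
  finally have D: "f1 + h x1 - C * g x1 \<le> - c * E" .
  have c: "c > 0"
  proof -
    have "\<alpha>u > 0" using al by linarith
    then have "L * \<alpha>u < 1" using al L by (simp add: pos_less_divide_eq mult.commute)
    then have "L < 1 / \<alpha>u" using \<open>\<alpha>u > 0\<close> by (simp add: pos_less_divide_eq)
    then show ?thesis by (simp add: c_def)
  qed
  have fin1: "f x1 < \<infinity>" using f1 by simp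
  have nn1: "f1 + h x1 \<ge> 0" using fh[OF fin1] f1 by simp
  have "g x1 \<noteq> 0"
  proof
    assume "g x1 = 0"
    then have "0 \<le> - c * E" using nn1 D by simp
    then have "E \<le> 0" using c by (simp add: mult_le_0_iff)
    then have "e = 0" by (simp add: E_def)
    then have "x1 = xk" by (simp add: e_def)
    then show False using \<open>g x1 = 0\<close> gk by simp
  qed
  then have "g x1 > 0" using gp fin1 by blast
  then show ?thesis using D f1 by (auto simp: C_def c_def E_def e_def)
qed



lemma prox_glob:
  fixes f :: "'a::real_inner \<Rightarrow> ereal"
  assumes P: "x1 \<in> prox (\<lambda>u. ereal \<alpha> * (f u - ereal (C * g u))) y" and al: "\<alpha> > 0"
    and nm: "\<And>u. f u \<noteq> -\<infinity>" and f1: "f x1 = ereal f1" and fu: "f u = ereal r"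
  shows "f1 - C * g x1 + inner ((1 / \<alpha>) *\<^sub>R (y - x1)) (u - x1) - (norm (u - x1))\<^sup>2 / (2 * \<alpha>) \<le> r - C * g u"
proof -
  obtain r1 where r1: "f x1 = ereal r1" and
    I: "\<alpha> * (r1 - C * g x1) + (norm (x1 - y))\<^sup>2 / 2 \<le> \<alpha> * (r - C * g u) + (norm (u - y))\<^sup>2 / 2"
    using prox_ineq[OF P al nm fu] by blast
  have "r1 = f1" using r1 f1 by simp
  have q: "(norm (u - y))\<^sup>2 = (norm (u - x1))\<^sup>2 + 2 * inner (u - x1) (x1 - y) + (norm (x1 - y))\<^sup>2"
    using dot_norm[of "u - x1" "x1 - y"] by simp
  have "\<alpha> * (f1 - C * g x1) \<le> \<alpha> * (r - C * g u) + (norm (u - x1))\<^sup>2 / 2 + inner (u - x1) (x1 - y)"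
    using I q \<open>r1 = f1\<close> by (simp add: add_divide_distrib)
  then have "\<alpha> * (f1 - C * g x1 + inner ((1 / \<alpha>) *\<^sub>R (y - x1)) (u - x1) - (norm (u - x1))\<^sup>2 / (2 * \<alpha>)) \<le> \<alpha> * (r - C * g u)"
    using al by (simp add: algebra_simps inner_diff_left inner_diff_right inner_commute)
  then show ?thesis using al by simp
qed


lemma frechet_limiting:
  assumes "v \<in> frechet_subdiff \<phi> x"
  shows "v \<in> limiting_subdiff \<phi> x"
  unfolding limiting_subdiff_def
  by (rule CollectI, rule exI[of _ "\<lambda>_. x"], rule exI[of _ "\<lambda>_. v"]) (use assms in auto)

theorem mainTheorem11:
  fixes f :: "'a::euclidean_space \<Rightarrow> ereal"
    and g h :: "'a \<Rightarrow> real"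
    and grad_g grad_h :: "'a \<Rightarrow> 'a"
    and L :: real
    and x :: "nat \<Rightarrow> 'a"
    and \<alpha> :: "nat \<Rightarrow> real"
    and \<alpha>_lo \<alpha>_up :: real
  defines "\<Omega> \<equiv> {y. g y \<noteq> 0}"
    and "F \<equiv> frac_obj f g h"
  assumes f_proper: "proper_fun f"
    and f_lsc: "lsc_fun f"
    \<comment> \<open>Assumption 1 (i)\<close>
    and A1: "loc_lipschitz_on (edom f \<inter> \<Omega>) (\<lambda>y. real_of_ereal (f y))"
    \<comment> \<open>Assumption 1 (ii)\<close>
    and g_deriv: "\<And>y. (g has_derivative (\<lambda>v. inner (grad_g y) v)) (at y)"
    and g_grad_lip: "loc_lipschitz_on UNIV grad_g"
    and g_pos: "\<And>y. y \<in> \<Omega> \<inter> edom f \<Longrightarrow> g y > 0"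
    \<comment> \<open>Assumption 1 (iii)\<close>
    and h_deriv: "\<And>y. (h has_derivative (\<lambda>v. inner (grad_h y) v)) (at y)"
    and L_pos: "L > 0"
    and h_lip: "\<And>y z. norm (grad_h y - grad_h z) \<le> L * norm (y - z)"
    \<comment> \<open>Assumption 1 (iv)\<close>
    and fh_nonneg: "\<And>y. y \<in> edom f \<Longrightarrow> f y + ereal (h y) \<ge> 0"
    and dom_ne: "\<Omega> \<inter> edom f \<noteq> {}"
    \<comment> \<open>Assumption 1 (v)\<close>
    and prox_ne: "\<And>y \<gamma>. \<gamma> \<ge> 0 \<Longrightarrow> prox (\<lambda>u. f u - ereal (\<gamma> * g u)) y \<noteq> {}"
    \<comment> \<open>Assumption 1 (vi)\<close>
    and F_lsc: "lsc_fun F"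
    and F_lb: "level_bounded F"
    \<comment> \<open>PPGA\<close>
    and x0: "x 0 \<in> \<Omega> \<inter> edom f"
    and step_lo: "0 < \<alpha>_lo" and step_up: "\<alpha>_up < 1 / L"
    and step: "\<And>k. \<alpha>_lo \<le> \<alpha> k \<and> \<alpha> k \<le> \<alpha>_up"
    and iter: "\<And>k. x (Suc k) \<in> prox (\<lambda>u. ereal (\<alpha> k) * (f u - ereal (real_of_ereal (F (x k)) * g u)))
                                    (x k - \<alpha> k *\<^sub>R grad_h (x k))"
  shows "(\<exists>a>0. \<forall>k. F (x (Suc k)) + ereal (a / 2 * (norm (x (Suc k) - x k))\<^sup>2) \<le> F (x k))
       \<and> (\<exists>b>0. \<forall>k. \<exists>w \<in> limiting_subdiff F (x (Suc k)). norm w \<le> b * norm (x (Suc k) - x k))"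
  proof -
  define S where "S = \<Omega> \<inter> edom f"
  have nm: "\<And>u. f u \<noteq> -\<infinity>" using f_proper by (simp add: proper_fun_def)
  define fr where "fr u = real_of_ereal (f u)" for u
  define Fr where "Fr u = (fr u + h u) / g u" for u
  have inS: "u \<in> S \<longleftrightarrow> g u \<noteq> 0 \<and> f u < \<infinity>" for u by (simp add: S_def \<Omega>_def edom_def)
  have fS: "f u = ereal (fr u)" if "u \<in> S" for u
    using that nm[of u] inS[of u] unfolding fr_def by (cases "f u") auto
  have FS: "F u = ereal (Fr u)" if "u \<in> S" for u
    using that inS[of u] unfolding F_def frac_obj_def Fr_def fr_def by simp
  have FnS: "F u = \<infinity>" if "u \<notin> S" for u
    using that inS[of u] unfolding F_def frac_obj_def by auto
  have gS: "g u > 0" if "u \<in> S" for u using g_pos that by (simp add: S_def)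
  have PS: "fr u + h u \<ge> 0" if "u \<in> S" for u
    using fh_nonneg[of u] that fS[OF that] by (simp add: S_def)
  have FrS: "Fr u \<ge> 0" if "u \<in> S" for u using PS[OF that] gS[OF that] by (simp add: Fr_def)
  define c where "c = (1 / \<alpha>_up - L) / 2"
  have alk: "0 < \<alpha> k" "\<alpha> k \<le> \<alpha>_up" for k using step[of k] step_lo by auto
  have c: "c > 0"
  proof -
    have "\<alpha>_up > 0" using alk(1)[of 0] alk(2)[of 0] by linarith
    then have "L * \<alpha>_up < 1" using step_up L_pos by (simp add: pos_less_divide_eq mult.commute)
    then have "L < 1 / \<alpha>_up" using \<open>\<alpha>_up > 0\<close> by (simp add: pos_less_divide_eq)
    then show ?thesis by (simp add: c_def)
  qed
  have CF: "real_of_ereal (F (x k)) = (fr (x k) + h (x k)) / g (x k)" if "x k \<in> S" for k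
    using FS[OF that] by (simp add: Fr_def)
  have itk: "x (Suc k) \<in> prox (\<lambda>u. ereal (\<alpha> k) * (f u - ereal (((fr (x k) + h (x k)) / g (x k)) * g u)))
                (x k - \<alpha> k *\<^sub>R grad_h (x k))" if "x k \<in> S" for k
    using iter[of k] unfolding CF[OF that] .
  have stepk: "x (Suc k) \<in> S \<and> fr (x (Suc k)) + h (x (Suc k)) - Fr (x k) * g (x (Suc k))
       \<le> - c * (norm (x (Suc k) - x k))\<^sup>2" if xk: "x k \<in> S" for k
  proof -
    have fh: "f y + ereal (h y) \<ge> 0" if "f y < \<infinity>" for y using fh_nonneg that by (simp add: edom_def)
    have gp: "g y > 0" if "g y \<noteq> 0" "f y < \<infinity>" for y using g_pos that by (simp add: \<Omega>_def edom_def)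
    obtain f1 where f1: "f (x (Suc k)) = ereal f1" "g (x (Suc k)) > 0"
      "f1 + h (x (Suc k)) - ((fr (x k) + h (x k)) / g (x k)) * g (x (Suc k))
         \<le> - ((1 / \<alpha>_up - L) / 2) * (norm (x (Suc k) - x k))\<^sup>2"
      using ppga_step[OF nm h_deriv h_lip fh gp fS[OF xk] gS[OF xk] alk(1) alk(2) step_up L_pos itk[OF xk]]
      by blast
    have "x (Suc k) \<in> S" using f1 inS by auto
    moreover have "fr (x (Suc k)) = f1" using f1 by (simp add: fr_def)
    ultimately show ?thesis using f1 by (simp add: Fr_def c_def)
  qed
  have allS: "x k \<in> S" for k
    by (induction k) (use x0 stepk in \<open>auto simp: S_def\<close>)
  have dec: "Fr (x (Suc k)) + c * (norm (x (Suc k) - x k))\<^sup>2 / g (x (Suc k)) \<le> Fr (x k)" for k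
  proof -
    have g1: "g (x (Suc k)) > 0" using gS allS by blast
    have "fr (x (Suc k)) + h (x (Suc k)) + c * (norm (x (Suc k) - x k))\<^sup>2 \<le> Fr (x k) * g (x (Suc k))"
      using stepk[OF allS[of k]] by simp
    then have "(fr (x (Suc k)) + h (x (Suc k)) + c * (norm (x (Suc k) - x k))\<^sup>2) / g (x (Suc k)) \<le> Fr (x k)"
      using g1 by (simp add: pos_divide_le_eq)
    then show ?thesis by (simp add: Fr_def add_divide_distrib)
  qed
  have decF: "Fr (x (Suc k)) \<le> Fr (x k)" for k
  proof -
    have "c * (norm (x (Suc k) - x k))\<^sup>2 / g (x (Suc k)) \<ge> 0" using c gS allS
      by (simp add: less_imp_le)
    then show ?thesis using dec[of k] by linarith
  qed
  have mono: "Fr (x k) \<le> Fr (x 0)" for k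
    by (induction k) (use decF order_trans in auto)
  define K where "K = {u. F u \<le> F (x 0)}"
  have KS: "K \<subseteq> S"
  proof
    fix u assume "u \<in> K"
    then have "F u \<le> ereal (Fr (x 0))" using FS allS by (simp add: K_def)
    then show "u \<in> S" using FnS by force
  qed
  have Kc: "compact K"
  proof -
    have "closed K" unfolding K_def by (rule lsc_closed[OF F_lsc])
    moreover have "bounded K" using F_lb FS[OF allS[of 0]]
      unfolding K_def level_bounded_def by simp
    ultimately show ?thesis by (simp add: compact_eq_bounded_closed)
  qed
  have xK: "x k \<in> K" for k using mono[of k] FS allS by (simp add: K_def)
  have gcont: "continuous_on UNIV g"
    using has_derivative_continuous[OF g_deriv] by (simp add: continuous_at_imp_continuous_on)
  obtain um where um: "um \<in> K" "\<forall>v\<in>K. g v \<le> g um"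
    using continuous_attains_sup[OF Kc _ continuous_on_subset[OF gcont]] xK by blast
  define Gm where "Gm = g um"
  have Gm: "Gm > 0" using um KS gS by (auto simp: Gm_def)
  have partI: "\<exists>a>0. \<forall>k. F (x (Suc k)) + ereal (a / 2 * (norm (x (Suc k) - x k))\<^sup>2) \<le> F (x k)"
  proof (intro exI[of _ "2 * c / Gm"] conjI allI)
    show "2 * c / Gm > 0" using c Gm by simp
    fix k
    define E where "E = (norm (x (Suc k) - x k))\<^sup>2"
    have g1: "g (x (Suc k)) > 0" "g (x (Suc k)) \<le> Gm" using gS allS um xK by (auto simp: Gm_def)
    have "c * E / Gm \<le> c * E / g (x (Suc k))"
      using g1 c by (intro divide_left_mono) (auto simp: E_def)
    then have "Fr (x (Suc k)) + 2 * c / Gm / 2 * E \<le> Fr (x k)" using dec[of k] by (simp add: E_def)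
    then show "F (x (Suc k)) + ereal (2 * c / Gm / 2 * (norm (x (Suc k) - x k))\<^sup>2) \<le> F (x k)"
      using FS allS by (simp add: E_def)
  qed
  have partII: "\<exists>b>0. \<forall>k. \<exists>w \<in> limiting_subdiff F (x (Suc k)). norm w \<le> b * norm (x (Suc k) - x k)"
  proof -
    obtain R where R: "K \<subseteq> cball 0 R"
      using compact_imp_bounded[OF Kc] unfolding bounded_pos by (auto simp: subset_iff)
    have ggc: "continuous_on UNIV grad_g" by (rule loclip_continuous[OF g_grad_lip])
    have "loc_lipschitz_on UNIV grad_h" unfolding loc_lipschitz_on_def
      using h_lip by (intro ballI exI[of _ 1] exI[of _ L]) (auto simp: dist_norm)
    then have hgc: "continuous_on UNIV grad_h" by (rule loclip_continuous)
    obtain Bg where Bg: "Bg \<ge> 0" "\<forall>y\<in>cball 0 R. norm (grad_g y) \<le> Bg"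
      "\<forall>y\<in>cball 0 R. \<forall>z\<in>cball 0 R. \<bar>g y - g z\<bar> \<le> Bg * norm (y - z)"
      using C1_lip_cball[OF g_deriv ggc, of R] by blast
    obtain Bh where Bh: "Bh \<ge> 0"
      "\<forall>y\<in>cball 0 R. \<forall>z\<in>cball 0 R. \<bar>h y - h z\<bar> \<le> Bh * norm (y - z)"
      using C1_lip_cball[OF h_deriv hgc, of R] by blast
    have KS': "K \<subseteq> edom f \<inter> \<Omega>" using KS by (auto simp: S_def)
    obtain Mf where Mf: "Mf \<ge> 0" "\<forall>y\<in>K. \<forall>z\<in>K. \<bar>fr y - fr z\<bar> \<le> Mf * dist y z"
      using loclip_compact[OF A1 Kc KS'] unfolding fr_def by blast
    obtain ul where ul: "ul \<in> K" "\<forall>v\<in>K. g ul \<le> g v"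
      using continuous_attains_inf[OF Kc _ continuous_on_subset[OF gcont]] xK by blast
    define gmin where "gmin = g ul"
    have gmin: "gmin > 0" using ul KS gS by (auto simp: gmin_def)
    define C0 where "C0 = Fr (x 0)"
    define M where "M = (C0 * Bg + Mf + Bh) / gmin"
    have M: "M \<ge> 0" using Bg Bh Mf gmin FrS[OF allS[of 0]] by (simp add: M_def C0_def)
    define b where "b = ((1 / \<alpha>_lo + L) + M * Bg) / gmin"
    have b: "b > 0" using step_lo L_pos M Bg gmin by (simp add: b_def add_pos_nonneg)
    have mainb: "\<exists>w \<in> limiting_subdiff F (x (Suc k)). norm w \<le> b * norm (x (Suc k) - x k)" for k
    proof -
      define xk where "xk = x k"
      define x1 where "x1 = x (Suc k)"
      define d where "d = norm (x1 - xk)"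
      define C where "C = Fr xk"
      have xkS: "xk \<in> S" "x1 \<in> S" using allS by (auto simp: xk_def x1_def)
      have xkK: "xk \<in> K" "x1 \<in> K" using xK by (auto simp: xk_def x1_def)
      have xkR: "xk \<in> cball 0 R" "x1 \<in> cball 0 R" using xkK R by auto
      have g1: "g x1 > 0" "g x1 \<ge> gmin" using gS xkS ul xkK by (auto simp: gmin_def)
      have gk: "g xk > 0" using gS xkS by auto
      have C0C: "0 \<le> C" "C \<le> C0" using FrS xkS mono[of k] by (auto simp: C_def C0_def xk_def)
      have Cg: "C * g xk = fr xk + h xk" using gk by (simp add: C_def Fr_def)
      define num where "num = C * g x1 - (fr x1 + h x1)"
      have CF1: "C - Fr x1 = num / g x1" using g1 by (simp add: num_def Fr_def field_simps)
      have CF1p: "C - Fr x1 \<ge> 0" using decF[of k] by (simp add: C_def xk_def x1_def)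
      have nump: "num \<ge> 0" using CF1 CF1p g1 by (simp add: zero_le_divide_iff)
      have numeq: "num = C * (g x1 - g xk) - (fr x1 - fr xk) - (h x1 - h xk)"
        using Cg by (simp add: num_def algebra_simps)
      have bg: "\<bar>g x1 - g xk\<bar> \<le> Bg * d" using Bg(3) xkR by (simp add: d_def)
      have bh: "\<bar>h x1 - h xk\<bar> \<le> Bh * d" using Bh(2) xkR by (simp add: d_def)
      have bf: "\<bar>fr x1 - fr xk\<bar> \<le> Mf * d" using Mf(2) xkK by (simp add: d_def dist_norm)
      have "C * (g x1 - g xk) \<le> C0 * (Bg * d)"
      proof -
        have "C * (g x1 - g xk) \<le> C * (Bg * d)" using bg C0C by (intro mult_left_mono) auto
        also have "\<dots> \<le> C0 * (Bg * d)" using C0C Bg by (intro mult_right_mono) (auto simp: d_def)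
        finally show ?thesis .
      qed
      then have numb: "num \<le> (C0 * Bg + Mf + Bh) * d" using numeq bh bf by (simp add: algebra_simps abs_le_iff)
      have CFb: "C - Fr x1 \<le> M * d"
      proof -
        have "num / g x1 \<le> num / gmin" using nump g1 gmin by (intro divide_left_mono) auto
        also have "\<dots> \<le> (C0 * Bg + Mf + Bh) * d / gmin" using numb gmin by (intro divide_right_mono) auto
        finally show ?thesis using CF1 by (simp add: M_def)
      qed
      define y where "y = xk - \<alpha> k *\<^sub>R grad_h xk"
      define v where "v = (1 / \<alpha> k) *\<^sub>R (y - x1)"
      have glob: "fr x1 - C * g x1 + inner v (u - x1) - (norm (u - x1))\<^sup>2 / (2 * \<alpha> k) \<le> r - C * g u"
        if "f u = ereal r" for u r
        using prox_glob[OF itk[OF allS[of k]] alk(1) nm fS[OF allS[of "Suc k"]] that]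
        by (simp add: v_def y_def C_def Fr_def xk_def x1_def)
      define w where "w = (1 / g x1) *\<^sub>R (v + grad_h x1 + (C - (fr x1 + h x1) / g x1) *\<^sub>R grad_g x1)"
      have wF: "w \<in> frechet_subdiff F x1"
        unfolding F_def w_def
        by (rule frechet_quot[where f=f and xa=x1 and g=g and h=h and Gh="grad_h x1" and Gg="grad_g x1"
              and \<alpha>="\<alpha> k" and C=C and v=v and fa="fr x1",
              OF fS[OF xkS(2)] g1(1) nm h_deriv g_deriv alk(1)[of k] glob])
      then have wL: "w \<in> limiting_subdiff F x1" by (rule frechet_limiting)
      have n1: "norm (v + grad_h x1) \<le> (1 / \<alpha>_lo + L) * d"
      proof -
        have eqv: "v + grad_h x1 = (1 / \<alpha> k) *\<^sub>R (xk - x1) + (grad_h x1 - grad_h xk)"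
          using alk(1)[of k] by (simp add: v_def y_def algebra_simps)
        have "norm (v + grad_h x1) \<le> norm ((1 / \<alpha> k) *\<^sub>R (xk - x1)) + norm (grad_h x1 - grad_h xk)"
          unfolding eqv by (rule norm_triangle_ineq)
        also have "\<dots> \<le> (1 / \<alpha>_lo) * d + L * d"
        proof (rule add_mono)
          have "norm ((1 / \<alpha> k) *\<^sub>R (xk - x1)) = (1 / \<alpha> k) * d"
            using alk(1)[of k] by (simp add: d_def norm_minus_commute)
          also have "\<dots> \<le> (1 / \<alpha>_lo) * d" using step[of k] step_lo
            by (intro mult_right_mono) (auto simp: d_def intro: divide_left_mono)
          finally show "norm ((1 / \<alpha> k) *\<^sub>R (xk - x1)) \<le> (1 / \<alpha>_lo) * d" .
          show "norm (grad_h x1 - grad_h xk) \<le> L * d" using h_lip by (simp add: d_def)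
        qed
        finally show ?thesis by (simp add: algebra_simps)
      qed
      have n2: "norm ((C - Fr x1) *\<^sub>R grad_g x1) \<le> M * d * Bg"
      proof -
        have "norm ((C - Fr x1) *\<^sub>R grad_g x1) = (C - Fr x1) * norm (grad_g x1)" using CF1p by simp
        also have "\<dots> \<le> (M * d) * Bg" using CFb CF1p Bg(2) xkR
          by (intro mult_mono) (auto simp: d_def)
        finally show ?thesis .
      qed
      have "norm (v + grad_h x1 + (C - Fr x1) *\<^sub>R grad_g x1) \<le> ((1 / \<alpha>_lo + L) + M * Bg) * d"
      proof -
        have "norm (v + grad_h x1 + (C - Fr x1) *\<^sub>R grad_g x1)
              \<le> norm (v + grad_h x1) + norm ((C - Fr x1) *\<^sub>R grad_g x1)" by (rule norm_triangle_ineq)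
        also have "\<dots> \<le> (1 / \<alpha>_lo + L) * d + M * d * Bg" using n1 n2 by (rule add_mono)
        finally show ?thesis by (simp add: algebra_simps)
      qed
      moreover have "norm w = norm (v + grad_h x1 + (C - Fr x1) *\<^sub>R grad_g x1) / g x1"
        using g1 by (simp add: w_def Fr_def)
      moreover have "norm (v + grad_h x1 + (C - Fr x1) *\<^sub>R grad_g x1) / g x1
          \<le> norm (v + grad_h x1 + (C - Fr x1) *\<^sub>R grad_g x1) / gmin"
        using g1 gmin by (intro divide_left_mono) auto
      ultimately have "norm w \<le> ((1 / \<alpha>_lo + L) + M * Bg) * d / gmin"
        using gmin by (smt (verit) divide_right_mono)
      then have "norm w \<le> b * d" by (simp add: b_def)
      then show ?thesis using wL by (auto simp: x1_def xk_def d_def)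
    qed
    show ?thesis using b mainb by blast
  qed
  show ?thesis using partI partII by blast
qed

end
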